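(* Let $\mathcal{N}(\rho)=\sum_{j\in [J]} R_j\rho R_j^{\dagger}$ be a CPTP map on $\mathcal{B}((\mathbb{C}^{\mathsf{p}})^{\otimes n})$. Let $\mathcal{C}\subset (\mathbb{C}^{\mathsf{p}})^{\otimes n}$ be a subspace with orthonormal basis $\{\psi_\alpha\}_{\alpha\in [K]}$. Define \[ \epsilon_{\mathsf{approx}}:=\max_{\alpha,\beta\in [K]}\sum_{j\in [J]}\big|\langle\psi_\alpha| R_j|\psi_\beta\rangle-\delta_{\alpha,\beta}\langle\psi_1| R_j|\psi_1\rangle\big|^2 . \] Let $\delta>K^5\epsilon_{\mathsf{approx}}$ be arbitrary. Then $\mathcal{C}$ is an $(\epsilon,\delta)$-approximate quantum error-detection code for $\mathcal{N}$ with $\epsilon = K^5\epsilon_{\mathsf{approx}}\, \delta^{-1}$.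
   Context: Let $P$ be the orthogonal projection onto a subspace $\mathcal{C}\subset(\mathbb{C}^\mathsf{p})^{\otimes n}$ and $\mathcal{N}$ a CPTP map on $\mathcal{B}((\mathbb{C}^\mathsf{p})^{\otimes n})$. $\mathcal{C}$ is called an $(\epsilon,\delta)$-approximate error-detection code for $\mathcal{N}$ if for every unit vector $|\Psi\rangle\in\mathcal{C}$ the following holds: if $\mathrm{tr}(P\mathcal{N}(|\Psi\rangle\langle\Psi|))\geq\delta$ then $\langle\Psi|\rho_{\mathcal{N},P}|\Psi\rangle\geq 1-\epsilon$, where $\rho_{\mathcal{N},P}=\mathrm{tr}(P\mathcal{N}(|\Psi\rangle\langle\Psi|))^{-1}\, P\mathcal{N}(|\Psi\rangle\langle\Psi|)P$. Here $[K]=\{1,\dots,K\}$. *)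

theory Defs
  imports "HOL-Analysis.Analysis" "Jordan_Normal_Form.Matrix"
begin

text \<open>Hilbert space (C^p)^{\<otimes>n} is modelled as complex vectors of dimension d = p^n
  (Jordan_Normal_Form vectors/matrices). The tensor-product structure plays no role.\<close>

definition cinner :: "complex vec \<Rightarrow> complex vec \<Rightarrow> complex" where
  "cinner u v = (\<Sum>i<dim_vec u. cnj (u $ i) * v $ i)"

definition adj :: "complex mat \<Rightarrow> complex mat" where
  "adj A = mat (dim_col A) (dim_row A) (\<lambda>(i,j). cnj (A $$ (j,i)))"

definition mtrace :: "complex mat \<Rightarrow> complex" where
  "mtrace A = (\<Sum>i<dim_row A. A $$ (i,i))"

definition ketbra :: "complex vec \<Rightarrow> complex mat" where
  "ketbra v = mat (dim_vec v) (dim_vec v) (\<lambda>(i,j). v $ i * cnj (v $ j))"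

definition kraus_map :: "nat \<Rightarrow> (nat \<Rightarrow> complex mat) \<Rightarrow> nat \<Rightarrow> complex mat \<Rightarrow> complex mat" where
  "kraus_map d R J \<rho> = mat d d (\<lambda>(i,k). \<Sum>j<J. (R j * \<rho> * adj (R j)) $$ (i,k))"

definition is_CPTP_kraus :: "nat \<Rightarrow> (nat \<Rightarrow> complex mat) \<Rightarrow> nat \<Rightarrow> bool" where
  "is_CPTP_kraus d R J \<longleftrightarrow> (\<forall>j<J. R j \<in> carrier_mat d d) \<and>
     mat d d (\<lambda>(i,k). \<Sum>j<J. (adj (R j) * R j) $$ (i,k)) = 1\<^sub>m d"

definition orthonormal_family :: "nat \<Rightarrow> (nat \<Rightarrow> complex vec) \<Rightarrow> nat \<Rightarrow> bool" where
  "orthonormal_family d \<psi> K \<longleftrightarrow> (\<forall>a<K. \<psi> a \<in> carrier_vec d) \<and>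
     (\<forall>a<K. \<forall>b<K. cinner (\<psi> a) (\<psi> b) = (if a = b then 1 else 0))"

definition span_family :: "nat \<Rightarrow> (nat \<Rightarrow> complex vec) \<Rightarrow> nat \<Rightarrow> complex vec set" where
  "span_family d \<psi> K = {vec d (\<lambda>i. \<Sum>a<K. c a * \<psi> a $ i) | c. True}"

definition is_orth_proj_onto :: "nat \<Rightarrow> complex mat \<Rightarrow> complex vec set \<Rightarrow> bool" where
  "is_orth_proj_onto d P C \<longleftrightarrow> P \<in> carrier_mat d d \<and> adj P = P \<and> P * P = P \<and>
     {P *\<^sub>v v | v. v \<in> carrier_vec d} = C"

text \<open>(eps,delta)-approximate error-detection code. The quantities tr(P N(|Psi><Psi|)) and
  <Psi|rho|Psi> are real; we compare their real parts.\<close>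
definition approx_detection_code ::
  "nat \<Rightarrow> (nat \<Rightarrow> complex mat) \<Rightarrow> nat \<Rightarrow> complex mat \<Rightarrow> complex vec set \<Rightarrow> real \<Rightarrow> real \<Rightarrow> bool" where
  "approx_detection_code d R J P C \<epsilon> \<delta> \<longleftrightarrow>
    (\<forall>\<Psi>\<in>C. \<Psi> \<in> carrier_vec d \<longrightarrow> cinner \<Psi> \<Psi> = 1 \<longrightarrow>
       (let Nrho = kraus_map d R J (ketbra \<Psi>); t = mtrace (P * Nrho);
            \<rho>NP = (1 / t) \<cdot>\<^sub>m (P * Nrho * P)
        in Re t \<ge> \<delta> \<longrightarrow> Re (cinner \<Psi> (\<rho>NP *\<^sub>v \<Psi>)) \<ge> 1 - \<epsilon>))"

text \<open>epsilon_approx; index 0 plays the role of the paper's index 1 (0-based indexing).\<close>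
definition eps_approx :: "(nat \<Rightarrow> complex mat) \<Rightarrow> nat \<Rightarrow> (nat \<Rightarrow> complex vec) \<Rightarrow> nat \<Rightarrow> real" where
  "eps_approx R J \<psi> K = Max {(\<Sum>j<J. (cmod (cinner (\<psi> a) (R j *\<^sub>v \<psi> b)
        - (if a = b then cinner (\<psi> 0) (R j *\<^sub>v \<psi> 0) else 0)))\<^sup>2) | a b. a < K \<and> b < K}"

end

theory Submission imports Defs begin

lemma mv_idx: "A \<in> carrier_mat d d \<Longrightarrow> v \<in> carrier_vec d \<Longrightarrow> i < d \<Longrightarrow>
  (A *\<^sub>v v) $ i = (\<Sum>k<d. A $$ (i,k) * v $ k)"
  by (simp add: scalar_prod_def lessThan_atLeast0 mult.commute)

lemma mm_idx: "A \<in> carrier_mat n m \<Longrightarrow> B \<in> carrier_mat m q \<Longrightarrow> i < n \<Longrightarrow> k < q \<Longrightarrow>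
  (A * B) $$ (i,k) = (\<Sum>l<m. A $$ (i,l) * B $$ (l,k))"
  by (simp add: scalar_prod_def lessThan_atLeast0 mult.commute)

lemma adj_carrier: "A \<in> carrier_mat n m \<Longrightarrow> adj A \<in> carrier_mat m n"
  by (simp add: adj_def)

lemma adj_idx: "A \<in> carrier_mat n m \<Longrightarrow> i < m \<Longrightarrow> k < n \<Longrightarrow> adj A $$ (i,k) = cnj (A $$ (k,i))"
  by (simp add: adj_def)

lemma ketbra_carrier: "v \<in> carrier_vec d \<Longrightarrow> ketbra v \<in> carrier_mat d d"
  by (simp add: ketbra_def)

lemma ketbra_idx: "v \<in> carrier_vec d \<Longrightarrow> i < d \<Longrightarrow> k < d \<Longrightarrow> ketbra v $$ (i,k) = v $ i * cnj (v $ k)"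
  by (simp add: ketbra_def)

lemma cinner_d: "u \<in> carrier_vec d \<Longrightarrow> cinner u v = (\<Sum>i<d. cnj (u $ i) * v $ i)"
  by (simp add: cinner_def)

lemma cinner_adj: assumes "A \<in> carrier_mat d d" "u \<in> carrier_vec d" "w \<in> carrier_vec d"
  shows "cinner u (A *\<^sub>v w) = cinner (adj A *\<^sub>v u) w"
proof -
  have "cinner u (A *\<^sub>v w) = (\<Sum>i<d. \<Sum>k<d. cnj (u $ i) * (A $$ (i,k) * w $ k))"
    using assms by (simp add: cinner_d mv_idx sum_distrib_left del: index_mult_mat_vec)
  also have "\<dots> = (\<Sum>k<d. \<Sum>i<d. cnj (u $ i) * (A $$ (i,k) * w $ k))"
    by (rule sum.swap)
  also have "\<dots> = (\<Sum>k<d. cnj ((adj A *\<^sub>v u) $ k) * w $ k)"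
    using assms adj_carrier[OF assms(1)]
    by (simp add: mv_idx adj_idx sum_distrib_left mult_ac del: index_mult_mat_vec)
  also have "\<dots> = cinner (adj A *\<^sub>v u) w"
    using assms adj_carrier[OF assms(1)] by (simp add: cinner_def del: index_mult_mat_vec)
  finally show ?thesis .
qed

lemma cinner_cnj: "u \<in> carrier_vec d \<Longrightarrow> w \<in> carrier_vec d \<Longrightarrow> cinner u w = cnj (cinner w u)"
  by (simp add: cinner_d mult.commute)

lemma sandwich: assumes "A \<in> carrier_mat d d" "v \<in> carrier_vec d" "i < d" "k < d"
  shows "(A * ketbra v * adj A) $$ (i,k) = (A *\<^sub>v v) $ i * cnj ((A *\<^sub>v v) $ k)"
proof -
  have c1: "A * ketbra v \<in> carrier_mat d d" using assms ketbra_carrier by auto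
  have "(A * ketbra v * adj A) $$ (i,k) = (\<Sum>l<d. (\<Sum>m<d. A $$ (i,m) * (v $ m * cnj (v $ l))) * cnj (A $$ (k,l)))"
    using assms c1 adj_carrier[OF assms(1)]
    apply (subst mm_idx[of _ d d _ d], simp_all)
    apply (rule sum.cong, simp)
    apply (subst mm_idx[of _ d d _ d], simp_all add: ketbra_carrier ketbra_idx adj_idx del: index_mult_mat)
    done
  also have "\<dots> = (\<Sum>m<d. A $$ (i,m) * v $ m) * (\<Sum>l<d. cnj (A $$ (k,l) * v $ l))"
    by (simp add: sum_distrib_left sum_distrib_right mult_ac)
  also have "\<dots> = (A *\<^sub>v v) $ i * cnj ((A *\<^sub>v v) $ k)"
    using assms by (simp add: mv_idx del: index_mult_mat_vec)
  finally show ?thesis .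
qed


lemma kraus_idx: assumes "\<forall>j<J. R j \<in> carrier_mat d d" "v \<in> carrier_vec d" "i < d" "k < d"
  shows "kraus_map d R J (ketbra v) $$ (i,k) = (\<Sum>j<J. (R j *\<^sub>v v) $ i * cnj ((R j *\<^sub>v v) $ k))"
proof -
  have "kraus_map d R J (ketbra v) $$ (i,k) = (\<Sum>j<J. (R j * ketbra v * adj (R j)) $$ (i,k))"
    using assms(3,4) unfolding kraus_map_def by simp
  also have "\<dots> = (\<Sum>j<J. (R j *\<^sub>v v) $ i * cnj ((R j *\<^sub>v v) $ k))"
    by (rule sum.cong, simp, rule sandwich, use assms in auto)
  finally show ?thesis .
qed

lemma kraus_carrier: "kraus_map d R J \<rho> \<in> carrier_mat d d"
  by (simp add: kraus_map_def)

lemma cinner_P_expand: "P \<in> carrier_mat d d \<Longrightarrow> w \<in> carrier_vec d \<Longrightarrow>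
  cinner w (P *\<^sub>v w) = (\<Sum>i<d. \<Sum>l<d. P $$ (i,l) * (w $ l * cnj (w $ i)))"
  by (simp add: cinner_d[of _ d] mv_idx[of _ d] sum_distrib_left mult_ac del: index_mult_mat_vec)

lemma trace_formula: assumes "\<forall>j<J. R j \<in> carrier_mat d d" "v \<in> carrier_vec d" "P \<in> carrier_mat d d"
  shows "mtrace (P * kraus_map d R J (ketbra v)) = (\<Sum>j<J. cinner (R j *\<^sub>v v) (P *\<^sub>v (R j *\<^sub>v v)))"
proof -
  have "mtrace (P * kraus_map d R J (ketbra v)) = (\<Sum>i<d. \<Sum>l<d. P $$ (i,l) * (\<Sum>j<J. (R j *\<^sub>v v) $ l * cnj ((R j *\<^sub>v v) $ i)))"
    unfolding mtrace_def using assms kraus_carrier[of d R J "ketbra v"]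
      index_mult_mat(2)[of P "kraus_map d R J (ketbra v)"]
    by (auto simp add: mm_idx[of _ d d _ d] kraus_carrier kraus_idx intro!: sum.cong simp del: index_mult_mat_vec index_mult_mat)
  also have "\<dots> = (\<Sum>j<J. \<Sum>i<d. \<Sum>l<d. P $$ (i,l) * ((R j *\<^sub>v v) $ l * cnj ((R j *\<^sub>v v) $ i)))"
    by (simp add: sum_distrib_left sum.swap[of _ "{..<J}"])
  also have "\<dots> = (\<Sum>j<J. cinner (R j *\<^sub>v v) (P *\<^sub>v (R j *\<^sub>v v)))"
    apply (rule sum.cong, simp)
    apply (rule cinner_P_expand[symmetric])
    using assms by auto
  finally show ?thesis .
qed

lemma triple_swap: fixes a b :: "nat \<Rightarrow> nat \<Rightarrow> complex" shows
 "(\<Sum>i<d. c i * (\<Sum>k<d. (\<Sum>j<J. a j i * b j k) * e k)) = (\<Sum>j<J. (\<Sum>k<d. b j k * e k) * (\<Sum>i<d. c i * a j i))"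
proof -
  have "(\<Sum>i<d. c i * (\<Sum>k<d. (\<Sum>j<J. a j i * b j k) * e k)) = (\<Sum>i<d. \<Sum>k<d. \<Sum>j<J. c i * a j i * b j k * e k)"
    by (simp add: sum_distrib_left sum_distrib_right mult_ac)
  also have "\<dots> = (\<Sum>i<d. \<Sum>j<J. \<Sum>k<d. c i * a j i * b j k * e k)"
    by (rule sum.cong[OF refl], rule sum.swap)
  also have "\<dots> = (\<Sum>j<J. \<Sum>i<d. \<Sum>k<d. c i * a j i * b j k * e k)"
    by (rule sum.swap)
  also have "\<dots> = (\<Sum>j<J. (\<Sum>k<d. b j k * e k) * (\<Sum>i<d. c i * a j i))"
    by (simp add: sum_product mult_ac)
  finally show ?thesis .
qed

lemma quad_formula: assumes "\<forall>j<J. R j \<in> carrier_mat d d" "v \<in> carrier_vec d" "P \<in> carrier_mat d d"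
  "adj P = P" "P *\<^sub>v v = v"
  shows "cinner v ((s \<cdot>\<^sub>m (P * kraus_map d R J (ketbra v) * P)) *\<^sub>v v)
     = s * (\<Sum>j<J. cinner (R j *\<^sub>v v) v * cinner v (R j *\<^sub>v v))"
proof -
  define N where "N = kraus_map d R J (ketbra v)"
  have N: "N \<in> carrier_mat d d" by (simp add: N_def kraus_carrier)
  have PNP: "P * N * P \<in> carrier_mat d d" using N assms by auto
  have "cinner v ((s \<cdot>\<^sub>m (P * N * P)) *\<^sub>v v) = s * cinner v ((P * N * P) *\<^sub>v v)"
    using assms PNP
    by (simp add: cinner_d[of _ d] mv_idx[of _ d] sum_distrib_left mult_ac del: index_mult_mat_vec index_mult_mat)
  also have "(P * N * P) *\<^sub>v v = P *\<^sub>v (N *\<^sub>v v)"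
    using assms N by (subst assoc_mult_mat_vec[of _ d d], auto)
  also have "cinner v (P *\<^sub>v (N *\<^sub>v v)) = cinner v (N *\<^sub>v v)"
    using assms N by (simp add: cinner_adj[of P d])
  also have "cinner v (N *\<^sub>v v) = (\<Sum>i<d. cnj (v $ i) * (\<Sum>k<d. (\<Sum>j<J. (R j *\<^sub>v v) $ i * cnj ((R j *\<^sub>v v) $ k)) * v $ k))"
    using assms N by (auto simp add: cinner_d[of _ d] mv_idx[of _ d] N_def kraus_idx intro!: sum.cong simp del: index_mult_mat_vec)
  also have "\<dots> = (\<Sum>j<J. (\<Sum>k<d. cnj ((R j *\<^sub>v v) $ k) * v $ k) * (\<Sum>i<d. cnj (v $ i) * (R j *\<^sub>v v) $ i))"
    by (rule triple_swap)
  also have "\<dots> = (\<Sum>j<J. cinner (R j *\<^sub>v v) v * cinner v (R j *\<^sub>v v))"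
    using assms by (auto intro!: sum.cong simp add: cinner_def simp del: index_mult_mat_vec)
  finally show ?thesis by (simp add: N_def)
qed

lemma cs_complex: fixes E c :: "nat \<Rightarrow> complex"
  assumes "(\<Sum>b<K. cmod (c b)^2) = 1"
  shows "cmod (\<Sum>b<K. E b * c b)^2 \<le> (\<Sum>b<K. cmod (E b)^2)"
proof -
  have "cmod (\<Sum>b<K. E b * c b) \<le> (\<Sum>b<K. cmod (E b) * cmod (c b))"
    by (rule order_trans[OF norm_sum], simp add: norm_mult)
  hence "cmod (\<Sum>b<K. E b * c b)^2 \<le> (\<Sum>b<K. cmod (E b) * cmod (c b))^2"
    by (simp add: power_mono)
  also have "\<dots> \<le> (\<Sum>b<K. cmod (E b)^2) * (\<Sum>b<K. cmod (c b)^2)"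
    by (rule Cauchy_Schwarz_ineq_sum)
  finally show ?thesis using assms by simp
qed

lemma sq_c: "complex_of_real (cmod z ^ 2) = z * cnj z"
  by (rule complex_norm_square)

lemma key_ineq:
  fixes c :: "nat \<Rightarrow> complex" and M :: "nat \<Rightarrow> nat \<Rightarrow> complex"
  assumes c1: "(\<Sum>a<K. cmod (c a)^2) = 1"
  shows "(\<Sum>a<K. cmod (\<Sum>b<K. M a b * c b)^2) - cmod (\<Sum>a<K. cnj (c a) * (\<Sum>b<K. M a b * c b))^2
     \<le> (\<Sum>a<K. \<Sum>b<K. cmod (M a b - (if a = b then l else 0))^2)"
proof -
  define E where "E a b = M a b - (if a = b then l else 0)" for a b
  define z where "z a = (\<Sum>b<K. E a b * c b)" for a
  define w where "w = (\<Sum>a<K. cnj (c a) * z a)"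
  have y: "(\<Sum>b<K. M a b * c b) = l * c a + z a" if "a < K" for a
  proof -
    have "(\<Sum>b<K. M a b * c b) = (\<Sum>b<K. E a b * c b + (if a = b then l * c b else 0))"
      by (rule sum.cong, auto simp: E_def algebra_simps)
    also have "\<dots> = z a + l * c a" using that by (simp add: sum.distrib z_def)
    finally show ?thesis by simp
  qed
  have cc: "(\<Sum>a<K. c a * cnj (c a)) = 1"
  proof -
    have "(\<Sum>a<K. c a * cnj (c a)) = complex_of_real (\<Sum>a<K. cmod (c a)^2)"
      unfolding of_real_sum by (simp only: sq_c)
    thus ?thesis using c1 by simp
  qed
  have s: "(\<Sum>a<K. cnj (c a) * (\<Sum>b<K. M a b * c b)) = l + w"
  proof -
    have "(\<Sum>a<K. cnj (c a) * (\<Sum>b<K. M a b * c b)) = (\<Sum>a<K. l * (c a * cnj (c a)) + cnj (c a) * z a)"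
      by (rule sum.cong, simp, subst y, auto simp: algebra_simps)
    also have "\<dots> = l * (\<Sum>a<K. c a * cnj (c a)) + w"
      by (simp add: sum.distrib sum_distrib_left w_def)
    finally show ?thesis using cc by simp
  qed
  have ident: "complex_of_real ((\<Sum>a<K. cmod (\<Sum>b<K. M a b * c b)^2) - cmod (l + w)^2)
      = complex_of_real ((\<Sum>a<K. cmod (z a)^2) - cmod w ^2)"
  proof -
    have "complex_of_real (\<Sum>a<K. cmod (\<Sum>b<K. M a b * c b)^2) = (\<Sum>a<K. (l * c a + z a) * cnj (l * c a + z a))"
      unfolding of_real_sum by (rule sum.cong, simp, subst y, auto simp only: sq_c)
    also have "\<dots> = (\<Sum>a<K. l * cnj l * (c a * cnj (c a)) + l * (c a * cnj (z a)) + cnj l * (cnj (c a) * z a) + z a * cnj (z a))"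
      by (rule sum.cong, auto simp: algebra_simps)
    also have "\<dots> = l * cnj l * (\<Sum>a<K. c a * cnj (c a)) + l * (\<Sum>a<K. c a * cnj (z a)) + cnj l * w + (\<Sum>a<K. z a * cnj (z a))"
      by (simp add: sum.distrib sum_distrib_left w_def)
    also have "\<dots> = l * cnj l + l * cnj w + cnj l * w + (\<Sum>a<K. z a * cnj (z a))"
      using cc by (simp add: w_def)
    finally have A: "complex_of_real (\<Sum>a<K. cmod (\<Sum>b<K. M a b * c b)^2) = l * cnj l + l * cnj w + cnj l * w + (\<Sum>a<K. z a * cnj (z a))" .
    have B: "complex_of_real (cmod (l + w)^2) = l * cnj l + l * cnj w + cnj l * w + w * cnj w"
      by (simp only: sq_c, simp add: algebra_simps)
    have C: "complex_of_real ((\<Sum>a<K. cmod (z a)^2) - cmod w ^2) = (\<Sum>a<K. z a * cnj (z a)) - w * cnj w"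
      unfolding of_real_diff of_real_sum by (simp only: sq_c)
    show ?thesis unfolding of_real_diff A B C[unfolded of_real_diff] by simp
  qed
  hence "(\<Sum>a<K. cmod (\<Sum>b<K. M a b * c b)^2) - cmod (l + w)^2 = (\<Sum>a<K. cmod (z a)^2) - cmod w ^2"
    using of_real_eq_iff by blast
  also have "\<dots> \<le> (\<Sum>a<K. cmod (z a)^2)" by simp
  also have "\<dots> \<le> (\<Sum>a<K. \<Sum>b<K. cmod (E a b)^2)"
    by (rule sum_mono, unfold z_def, rule cs_complex[OF c1])
  finally show ?thesis using s by (simp add: E_def)
qed

lemma span_coeff: assumes "\<forall>a<K. \<psi> a \<in> carrier_vec d" "u \<in> carrier_vec d"
  shows "cinner u (vec d (\<lambda>i. \<Sum>a<K. c a * \<psi> a $ i)) = (\<Sum>a<K. c a * cinner u (\<psi> a))"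
proof -
  have "cinner u (vec d (\<lambda>i. \<Sum>a<K. c a * \<psi> a $ i)) = (\<Sum>i<d. \<Sum>a<K. c a * (cnj (u $ i) * \<psi> a $ i))"
    using assms by (simp add: cinner_d[of _ d] sum_distrib_left mult_ac)
  also have "\<dots> = (\<Sum>a<K. \<Sum>i<d. c a * (cnj (u $ i) * \<psi> a $ i))" by (rule sum.swap)
  also have "\<dots> = (\<Sum>a<K. c a * cinner u (\<psi> a))"
    using assms by (simp add: cinner_d[of _ d] sum_distrib_left)
  finally show ?thesis .
qed

lemma delta_sum: fixes K :: nat assumes that: "a < K" shows "(\<Sum>b<K. c b * (if a = b then 1 else 0)) = (c a :: complex)"
proof -
  have "(\<Sum>b<K. c b * (if a = b then 1 else 0)) = (\<Sum>b<K. if a = b then c b else 0)"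
    by (rule sum.cong) auto
  also have "\<dots> = c a" by (subst sum.delta'[OF finite_lessThan]) (use that in auto)
  finally show ?thesis .
qed

lemma orth_coeff: assumes "orthonormal_family d \<psi> K" "a < K"
  shows "cinner (\<psi> a) (vec d (\<lambda>i. \<Sum>b<K. c b * \<psi> b $ i)) = c a"
proof -
  have "cinner (\<psi> a) (vec d (\<lambda>i. \<Sum>b<K. c b * \<psi> b $ i)) = (\<Sum>b<K. c b * cinner (\<psi> a) (\<psi> b))"
    using assms by (intro span_coeff) (auto simp: orthonormal_family_def)
  also have "\<dots> = (\<Sum>b<K. c b * (if a = b then 1 else 0))"
    using assms by (intro sum.cong) (auto simp: orthonormal_family_def)
  also have "\<dots> = c a" using assms(2) by (rule delta_sum)
  finally show ?thesis .
qed

lemma proj_fix: assumes "is_orth_proj_onto d P S" "x \<in> S" shows "P *\<^sub>v x = x"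
proof -
  from assms obtain v where v: "v \<in> carrier_vec d" "x = P *\<^sub>v v" unfolding is_orth_proj_onto_def by blast
  have Pc: "P \<in> carrier_mat d d" "P * P = P" using assms unfolding is_orth_proj_onto_def by auto
  have "(P * P) *\<^sub>v v = P *\<^sub>v (P *\<^sub>v v)" using v Pc by (intro assoc_mult_mat_vec) auto
  thus ?thesis using Pc v by simp
qed

lemma proj_range: assumes "is_orth_proj_onto d P S" "w \<in> carrier_vec d" shows "P *\<^sub>v w \<in> S"
  using assms unfolding is_orth_proj_onto_def by blast

lemma psi_in_span: assumes "orthonormal_family d \<psi> K" "a < K" shows "\<psi> a \<in> span_family d \<psi> K"
proof -
  have "\<psi> a = vec d (\<lambda>i. \<Sum>b<K. (if b = a then 1 else 0) * \<psi> b $ i)"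
  proof (rule eq_vecI)
    fix i assume i: "i < dim_vec (vec d (\<lambda>i. \<Sum>b<K. (if b = a then 1 else 0) * \<psi> b $ i))"
    have "(\<Sum>b<K. (if b = a then 1 else 0) * \<psi> b $ i) = (\<Sum>b<K. if b = a then \<psi> b $ i else 0)"
      by (rule sum.cong) auto
    also have "\<dots> = \<psi> a $ i" using assms by (subst sum.delta) auto
    finally show "\<psi> a $ i = vec d (\<lambda>i. \<Sum>b<K. (if b = a then 1 else 0) * \<psi> b $ i) $ i" using i by simp
  qed (use assms in \<open>auto simp: orthonormal_family_def\<close>)
  thus ?thesis unfolding span_family_def mem_Collect_eq
    by (intro exI[of _ "\<lambda>b. if b = a then 1 else 0"]) simp
qed

lemma P_formula: assumes orth: "orthonormal_family d \<psi> K" and pr: "is_orth_proj_onto d P (span_family d \<psi> K)"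
  and w: "w \<in> carrier_vec d"
  shows "cinner w (P *\<^sub>v w) = complex_of_real (\<Sum>a<K. cmod (cinner (\<psi> a) w)^2)"
proof -
  have Pc: "P \<in> carrier_mat d d" "adj P = P" using pr unfolding is_orth_proj_onto_def by auto
  have psic: "\<forall>a<K. \<psi> a \<in> carrier_vec d" using orth unfolding orthonormal_family_def by auto
  obtain c where c: "P *\<^sub>v w = vec d (\<lambda>i. \<Sum>b<K. c b * \<psi> b $ i)"
    using proj_range[OF pr w] unfolding span_family_def by blast
  have ca: "c a = cinner (\<psi> a) w" if "a < K" for a
  proof -
    have "c a = cinner (\<psi> a) (P *\<^sub>v w)" using orth_coeff[OF orth that] c by simp
    also have "\<dots> = cinner (adj P *\<^sub>v \<psi> a) w" using Pc psic that w by (intro cinner_adj) auto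
    also have "\<dots> = cinner (\<psi> a) w" using Pc proj_fix[OF pr psi_in_span[OF orth that]] by simp
    finally show ?thesis .
  qed
  have "cinner w (P *\<^sub>v w) = (\<Sum>b<K. c b * cinner w (\<psi> b))"
    unfolding c using psic w by (rule span_coeff)
  also have "\<dots> = (\<Sum>b<K. cinner (\<psi> b) w * cnj (cinner (\<psi> b) w))"
    using psic w ca by (intro sum.cong) (auto intro: cinner_cnj)
  also have "\<dots> = complex_of_real (\<Sum>a<K. cmod (cinner (\<psi> a) w)^2)"
    unfolding of_real_sum by (simp only: sq_c)
  finally show ?thesis .
qed


theorem theorem1:
  fixes p n J K :: nat and R :: "nat \<Rightarrow> complex mat" and \<psi> :: "nat \<Rightarrow> complex vec"
    and P :: "complex mat" and \<delta> :: real
  assumes "is_CPTP_kraus (p ^ n) R J"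
    and "K \<ge> 1"
    and "orthonormal_family (p ^ n) \<psi> K"
    and "is_orth_proj_onto (p ^ n) P (span_family (p ^ n) \<psi> K)"
    and "\<delta> > real K ^ 5 * eps_approx R J \<psi> K"
  shows "approx_detection_code (p ^ n) R J P (span_family (p ^ n) \<psi> K)
           (real K ^ 5 * eps_approx R J \<psi> K / \<delta>) \<delta>"
proof -
  define d where "d = p ^ n"
  define e where "e = eps_approx R J \<psi> K"
  have Rc: "\<forall>j<J. R j \<in> carrier_mat d d" using assms(1) unfolding is_CPTP_kraus_def d_def by auto
  have orth: "orthonormal_family d \<psi> K" using assms(3) d_def by simp
  have psic: "\<forall>a<K. \<psi> a \<in> carrier_vec d" using orth unfolding orthonormal_family_def by auto
  have pr: "is_orth_proj_onto d P (span_family d \<psi> K)" using assms(4) d_def by simp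
  have Pc: "P \<in> carrier_mat d d" "adj P = P" using pr unfolding is_orth_proj_onto_def by auto
  define M where "M j a b = cinner (\<psi> a) (R j *\<^sub>v \<psi> b)" for j a b
  define F where "F a b = (\<Sum>j<J. (cmod (cinner (\<psi> a) (R j *\<^sub>v \<psi> b)
        - (if a = b then cinner (\<psi> 0) (R j *\<^sub>v \<psi> 0) else 0)))\<^sup>2)" for a b
  have Fset: "{(\<Sum>j<J. (cmod (cinner (\<psi> a) (R j *\<^sub>v \<psi> b)
        - (if a = b then cinner (\<psi> 0) (R j *\<^sub>v \<psi> 0) else 0)))\<^sup>2) | a b. a < K \<and> b < K}
        = (\<lambda>(a,b). F a b) ` ({..<K} \<times> {..<K})"
    unfolding F_def by auto
  have eF: "F a b \<le> e" if "a < K" "b < K" for a b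
    unfolding e_def eps_approx_def Fset
    by (rule Max_ge) (use that in auto)
  have e0: "0 \<le> e" using eF[of 0 0] assms(2) by (simp add: F_def sum_nonneg)
  have K5: "real K ^ 2 * e \<le> real K ^ 5 * e"
    using assms(2) e0 by (intro mult_right_mono power_increasing) auto
  have dpos: "\<delta> > 0" using assms(5) e0 unfolding e_def[symmetric] by (smt (verit) zero_le_mult_iff zero_le_power of_nat_0_le_iff)
  show ?thesis
    unfolding approx_detection_code_def Let_def d_def[symmetric] e_def[symmetric]
  proof (intro ballI impI)
    fix \<Psi> assume \<Psi>S: "\<Psi> \<in> span_family d \<psi> K" and \<Psi>c: "\<Psi> \<in> carrier_vec d" and \<Psi>1: "cinner \<Psi> \<Psi> = 1"
    obtain c where c: "\<Psi> = vec d (\<lambda>i. \<Sum>a<K. c a * \<psi> a $ i)" using \<Psi>S unfolding span_family_def by blast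
    have P\<Psi>: "P *\<^sub>v \<Psi> = \<Psi>" using proj_fix[OF pr \<Psi>S] .
    have ca: "cinner (\<psi> a) \<Psi> = c a" if "a < K" for a using orth_coeff[OF orth that] c by simp
    have c1: "(\<Sum>a<K. cmod (c a)^2) = 1"
    proof -
      have "cinner \<Psi> \<Psi> = (\<Sum>a<K. c a * cinner \<Psi> (\<psi> a))"
        using span_coeff[OF psic \<Psi>c] c by metis
      also have "\<dots> = (\<Sum>a<K. c a * cnj (c a))"
        using psic \<Psi>c ca by (intro sum.cong) (auto simp: cinner_cnj[of \<Psi> d])
      also have "\<dots> = complex_of_real (\<Sum>a<K. cmod (c a)^2)"
        unfolding of_real_sum by (simp only: sq_c)
      finally show ?thesis using \<Psi>1 by (metis of_real_eq_1_iff)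
    qed
    define v where "v j = R j *\<^sub>v \<Psi>" for j
    have vc: "v j \<in> carrier_vec d" if "j < J" for j using Rc[rule_format, OF that] \<Psi>c by (simp add: v_def)
    have yj: "cinner (\<psi> a) (v j) = (\<Sum>b<K. M j a b * c b)" if "a < K" "j < J" for a j
    proof -
      have Rj: "R j \<in> carrier_mat d d" using Rc that by auto
      have A: "adj (R j) *\<^sub>v \<psi> a \<in> carrier_vec d" using Rj psic that adj_carrier[OF Rj] by auto
      have "cinner (\<psi> a) (v j) = cinner (adj (R j) *\<^sub>v \<psi> a) \<Psi>"
        unfolding v_def using Rj psic that \<Psi>c by (intro cinner_adj) auto
      also have "\<dots> = (\<Sum>b<K. c b * cinner (adj (R j) *\<^sub>v \<psi> a) (\<psi> b))"
        using span_coeff[OF psic A] c by metis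
      also have "\<dots> = (\<Sum>b<K. M j a b * c b)"
        unfolding M_def using Rj psic that
        by (intro sum.cong) (auto simp: cinner_adj[of "R j" d, symmetric])
      finally show ?thesis .
    qed
    have sj: "cinner \<Psi> (v j) = (\<Sum>a<K. cnj (c a) * cinner (\<psi> a) (v j))" if "j < J" for j
    proof -
      have "cinner \<Psi> (v j) = cnj (cinner (v j) \<Psi>)" using cinner_cnj[OF \<Psi>c vc[OF that]] .
      also have "cinner (v j) \<Psi> = (\<Sum>a<K. c a * cinner (v j) (\<psi> a))"
        using span_coeff[OF psic vc[OF that]] c by metis
      finally show ?thesis using psic vc[OF that]
        by (simp add: cinner_cnj[of "\<psi> _" d "v j"])
    qed
    define T where "T = (\<Sum>j<J. \<Sum>a<K. cmod (cinner (\<psi> a) (v j))^2)"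
    define S where "S = (\<Sum>j<J. cmod (cinner \<Psi> (v j))^2)"
    have tr: "mtrace (P * kraus_map d R J (ketbra \<Psi>)) = complex_of_real T"
    proof -
      have "(\<Sum>j<J. cinner (v j) (P *\<^sub>v v j)) = (\<Sum>j<J. complex_of_real (\<Sum>a<K. cmod (cinner (\<psi> a) (v j))^2))"
        by (rule sum.cong[OF refl], rule P_formula[OF orth pr vc]) simp
      thus ?thesis unfolding trace_formula[OF Rc \<Psi>c Pc(1)] T_def v_def[symmetric] of_real_sum[of _ "{..<J}"] .
    qed
    have qd: "cinner \<Psi> ((s \<cdot>\<^sub>m (P * kraus_map d R J (ketbra \<Psi>) * P)) *\<^sub>v \<Psi>) = s * complex_of_real S" for s
    proof -
      have "(\<Sum>j<J. cinner (v j) \<Psi> * cinner \<Psi> (v j)) = (\<Sum>j<J. complex_of_real (cmod (cinner \<Psi> (v j))^2))"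
        apply (rule sum.cong[OF refl])
        apply (subst cinner_cnj[OF vc \<Psi>c], simp)
        apply (simp only: sq_c)
        by (simp add: mult.commute)
      thus ?thesis unfolding quad_formula[OF Rc \<Psi>c Pc P\<Psi>] S_def v_def[symmetric] of_real_sum by simp
    qed
    have TS: "T - S \<le> real K ^ 2 * e"
    proof -
      have "T - S = (\<Sum>j<J. (\<Sum>a<K. cmod (cinner (\<psi> a) (v j))^2) - cmod (cinner \<Psi> (v j))^2)"
        by (simp add: T_def S_def sum_subtractf)
      also have "\<dots> \<le> (\<Sum>j<J. \<Sum>a<K. \<Sum>b<K. cmod (M j a b - (if a = b then M j 0 0 else 0))^2)"
      proof (rule sum_mono)
        fix j assume "j \<in> {..<J}" hence j: "j < J" by simp
        have "(\<Sum>a<K. cmod (cinner (\<psi> a) (v j))^2) - cmod (cinner \<Psi> (v j))^2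
          = (\<Sum>a<K. cmod (\<Sum>b<K. M j a b * c b)^2) - cmod (\<Sum>a<K. cnj (c a) * (\<Sum>b<K. M j a b * c b))^2"
          using j by (simp add: yj sj)
        also have "\<dots> \<le> (\<Sum>a<K. \<Sum>b<K. cmod (M j a b - (if a = b then M j 0 0 else 0))^2)"
          by (rule key_ineq[OF c1])
        finally show "(\<Sum>a<K. cmod (cinner (\<psi> a) (v j))^2) - cmod (cinner \<Psi> (v j))^2
          \<le> (\<Sum>a<K. \<Sum>b<K. cmod (M j a b - (if a = b then M j 0 0 else 0))^2)" .
      qed
      also have "\<dots> = (\<Sum>a<K. \<Sum>b<K. F a b)"
        unfolding F_def M_def
        by (subst sum.swap, rule sum.cong[OF refl], subst sum.swap, simp)
      also have "\<dots> \<le> (\<Sum>a<K. \<Sum>b<K. e)"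
        by (intro sum_mono eF) auto
      also have "\<dots> = real K ^ 2 * e" by (simp add: power2_eq_square)
      finally show ?thesis .
    qed
    show "1 - real K ^ 5 * e / \<delta> \<le> Re (cinner \<Psi> ((1 / mtrace (P * kraus_map d R J (ketbra \<Psi>)) \<cdot>\<^sub>m
               (P * kraus_map d R J (ketbra \<Psi>) * P)) *\<^sub>v \<Psi>))"
      if "\<delta> \<le> Re (mtrace (P * kraus_map d R J (ketbra \<Psi>)))"
    proof -
      have Td: "\<delta> \<le> T" using that tr by simp
      have Tp: "T > 0" using Td dpos by simp
      have eq: "Re (cinner \<Psi> ((1 / mtrace (P * kraus_map d R J (ketbra \<Psi>)) \<cdot>\<^sub>m
               (P * kraus_map d R J (ketbra \<Psi>) * P)) *\<^sub>v \<Psi>)) = S / T"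
        unfolding qd tr by (simp add: Re_divide_of_real)
      have "real K ^ 5 * e / T \<le> real K ^ 5 * e / \<delta>"
        using Td dpos e0 by (intro divide_left_mono) auto
      moreover have "(T - S) / T \<le> real K ^ 5 * e / T"
        using TS K5 Tp by (intro divide_right_mono) auto
      moreover have "S / T = 1 - (T - S) / T" using Tp by (simp add: field_simps)
      ultimately show ?thesis unfolding eq by linarith
    qed
  qed
qed

end
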